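(* Let $G=(V,E)$ be a connected simple graph which contains a cycle, and suppose that the shortest cycle in $G$ has even length. Then the path metric $\partial$ on $V$ is not conditionally strictly negative definite.
   Context: The path metric $\partial(x,y)$ is the length of a shortest path between vertices $x,y$. A symmetric real function $K$ on $V\times V$ is conditionally strictly negative definite if for every finitely supported $\lambda\colon V\to\mathbb{C}$, $\lambda\neq0$, with $\sum_v\lambda(v)=0$ one has $\sum_{x,y}\lambda(x)\overline{\lambda(y)}K(x,y)<0$. *)

theory Defs
  imports Complex_Main
begin

definition simple_graph :: "'a set \<Rightarrow> ('a \<Rightarrow> 'a \<Rightarrow> bool) \<Rightarrow> bool" where
  "simple_graph V E \<longleftrightarrow> (\<forall>x y. E x y \<longrightarrow> x \<in> V \<and> y \<in> V \<and> x \<noteq> y \<and> E y x)"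

text \<open>A walk is a nonempty list of vertices, consecutive ones adjacent; its length is
  the number of edges, i.e. length minus one.\<close>
definition is_walk :: "'a set \<Rightarrow> ('a \<Rightarrow> 'a \<Rightarrow> bool) \<Rightarrow> 'a list \<Rightarrow> bool" where
  "is_walk V E p \<longleftrightarrow> p \<noteq> [] \<and> set p \<subseteq> V \<and> (\<forall>i. Suc i < length p \<longrightarrow> E (p ! i) (p ! Suc i))"

definition connected_graph :: "'a set \<Rightarrow> ('a \<Rightarrow> 'a \<Rightarrow> bool) \<Rightarrow> bool" where
  "connected_graph V E \<longleftrightarrow> V \<noteq> {} \<and>
     (\<forall>x\<in>V. \<forall>y\<in>V. \<exists>p. is_walk V E p \<and> hd p = x \<and> last p = y)"

definition path_dist :: "'a set \<Rightarrow> ('a \<Rightarrow> 'a \<Rightarrow> bool) \<Rightarrow> 'a \<Rightarrow> 'a \<Rightarrow> nat" where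
  "path_dist V E x y = (LEAST n. \<exists>p. is_walk V E p \<and> hd p = x \<and> last p = y \<and> length p = Suc n)"

definition is_cycle :: "'a set \<Rightarrow> ('a \<Rightarrow> 'a \<Rightarrow> bool) \<Rightarrow> 'a list \<Rightarrow> bool" where
  "is_cycle V E c \<longleftrightarrow> length c \<ge> 3 \<and> distinct c \<and> set c \<subseteq> V \<and>
     (\<forall>i < length c. E (c ! i) (c ! ((Suc i) mod length c)))"

definition has_cycle :: "'a set \<Rightarrow> ('a \<Rightarrow> 'a \<Rightarrow> bool) \<Rightarrow> bool" where
  "has_cycle V E \<longleftrightarrow> (\<exists>c. is_cycle V E c)"

definition girth :: "'a set \<Rightarrow> ('a \<Rightarrow> 'a \<Rightarrow> bool) \<Rightarrow> nat" where
  "girth V E = (LEAST n. \<exists>c. is_cycle V E c \<and> length c = n)"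

text \<open>Conditionally strictly negative definite kernel on V: for every finitely supported
  nonzero \<lambda> : V \<rightarrow> \<complex> with total sum zero, the Hermitian form is strictly negative.
  (The form is real since K is symmetric and real-valued; we compare its real part.)\<close>
definition cond_strict_neg_def :: "'a set \<Rightarrow> ('a \<Rightarrow> 'a \<Rightarrow> real) \<Rightarrow> bool" where
  "cond_strict_neg_def V K \<longleftrightarrow>
     (\<forall>l :: 'a \<Rightarrow> complex. finite {v. l v \<noteq> 0} \<and> {v. l v \<noteq> 0} \<subseteq> V \<and> (\<exists>v. l v \<noteq> 0) \<and>
        (\<Sum>v\<in>{v. l v \<noteq> 0}. l v) = 0 \<longrightarrow>
        Re (\<Sum>x\<in>{v. l v \<noteq> 0}. \<Sum>y\<in>{v. l v \<noteq> 0}. l x * cnj (l y) * complex_of_real (K x y)) < 0)"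

end

theory Submission imports Defs begin

lemma walk_iff: "is_walk V E p \<longleftrightarrow> p \<noteq> [] \<and> set p \<subseteq> V \<and> successively E p"
  unfolding is_walk_def successively_conv_nth by blast

lemma cycle_iff:
  "is_cycle V E c \<longleftrightarrow> 3 \<le> length c \<and> distinct c \<and> set c \<subseteq> V \<and> successively E (c @ [hd c])"
proof (cases "c = []")
  case True then show ?thesis by (auto simp: is_cycle_def)
next
  case ne: False
  have "(\<forall>i < length c. E (c ! i) (c ! ((Suc i) mod length c))) \<longleftrightarrow>
        (\<forall>i. Suc i < length (c @ [hd c]) \<longrightarrow> E ((c @ [hd c]) ! i) ((c @ [hd c]) ! Suc i))"
  proof (intro iffI allI impI)
    fix i assume H: "\<forall>i < length c. E (c ! i) (c ! ((Suc i) mod length c))" "Suc i < length (c @ [hd c])"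
    show "E ((c @ [hd c]) ! i) ((c @ [hd c]) ! Suc i)"
    proof (cases "Suc i < length c")
      case True then show ?thesis using H(1)[rule_format, of i] True by (auto simp: nth_append)
    next
      case False
      then have "Suc i = length c" using H by simp
      then show ?thesis using H(1)[rule_format, of i] ne by (auto simp: nth_append hd_conv_nth)
    qed
  next
    fix i assume H: "\<forall>i. Suc i < length (c @ [hd c]) \<longrightarrow> E ((c @ [hd c]) ! i) ((c @ [hd c]) ! Suc i)" "i < length c"
    show "E (c ! i) (c ! ((Suc i) mod length c))"
    proof (cases "Suc i < length c")
      case True then show ?thesis using H(1)[rule_format, of i] by (auto simp: nth_append)
    next
      case False
      then have "Suc i = length c" using H by simp
      then show ?thesis using H(1)[rule_format, of i] ne by (auto simp: nth_append hd_conv_nth)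
    qed
  qed
  then show ?thesis unfolding is_cycle_def successively_conv_nth by blast
qed

lemma Esym: "simple_graph V E \<Longrightarrow> (\<lambda>x y. E y x) = E"
  unfolding simple_graph_def by blast

lemma succ_take: "successively P xs \<Longrightarrow> successively P (take k xs)"
  using successively_append_iff[of P "take k xs" "drop k xs"] by simp

lemma succ_drop: "successively P xs \<Longrightarrow> successively P (drop k xs)"
  using successively_append_iff[of P "take k xs" "drop k xs"] by simp

lemma succ_rev: assumes "simple_graph V E" "successively E p" shows "successively E (rev p)"
proof -
  have "successively (\<lambda>x y. E y x) p"
    by (rule successively_mono[OF assms(2)]) (use assms(1) in \<open>auto simp: simple_graph_def\<close>)
  then show ?thesis by simp
qed

lemma short_paths_eq:
  assumes sg: "simple_graph V E" and cmin: "\<And>c. is_cycle V E c \<Longrightarrow> g \<le> length c"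
  shows "is_walk V E P \<Longrightarrow> is_walk V E Q \<Longrightarrow> distinct P \<Longrightarrow> distinct Q \<Longrightarrow> hd P = hd Q
    \<Longrightarrow> last P = last Q \<Longrightarrow> length P + length Q < g + 2 \<Longrightarrow> P = Q"
proof (induction "length P + length Q" arbitrary: P Q rule: less_induct)
  case less
  obtain x P1 where P: "P = x # P1" using less.prems(1) by (cases P) (auto simp: walk_iff)
  obtain y Q1 where Q: "Q = y # Q1" using less.prems(2) by (cases Q) (auto simp: walk_iff)
  have xy: "y = x" using less.prems(5) P Q by simp
  show ?case
  proof (cases "P1 = []")
    case True
    have "Q1 = []"
    proof (rule ccontr)
      assume "Q1 \<noteq> []"
      then have "last Q \<in> set Q1" using Q by (simp add: last_in_set)
      moreover have "last Q = x" using less.prems(6) P True by simp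
      ultimately show False using less.prems(4) Q xy by auto
    qed
    then show ?thesis using P Q xy True by simp
  next
    case P1ne: False
    show ?thesis
    proof (cases "Q1 = []")
      case True
      have "last P \<in> set P1" using P P1ne by (simp add: last_in_set)
      moreover have "last P = x" using less.prems(6) Q True xy by simp
      ultimately show ?thesis using less.prems(3) P by auto
    next
      case Q1ne: False
      obtain p P' where P1: "P1 = p # P'" using P1ne by (cases P1) auto
      obtain q Q' where Q1: "Q1 = q # Q'" using Q1ne by (cases Q1) auto
      show ?thesis
      proof (cases "p = q")
        case True
        have "P1 = Q1"
        proof (rule less.hyps[of P1 Q1])
          show "length P1 + length Q1 < length P + length Q" using P Q by simp
          show "is_walk V E P1" using less.prems(1) P P1 by (auto simp: walk_iff)
          show "is_walk V E Q1" using less.prems(2) Q Q1 by (auto simp: walk_iff)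
          show "distinct P1" "distinct Q1" using less.prems(3,4) P Q by auto
          show "hd P1 = hd Q1" using True P1 Q1 by simp
          show "last P1 = last Q1" using less.prems(6) P Q P1ne Q1ne by simp
          show "length P1 + length Q1 < g + 2" using less.prems(7) P Q by simp
        qed
        then show ?thesis using P Q xy by simp
      next
        case pq: False
        have "\<exists>z\<in>set P1. z \<in> set Q1"
          using less.prems(6) P Q P1ne Q1ne last_in_set[of P1] last_in_set[of Q1] by (metis last_ConsR)
        then obtain ps z ps' where sp: "P1 = ps @ z # ps'" and zQ: "z \<in> set Q1"
            and nps: "\<forall>w\<in>set ps. w \<notin> set Q1"
          using split_list_first_prop[of P1 "\<lambda>w. w \<in> set Q1"] by blast
        obtain qs qs' where sq: "Q1 = qs @ z # qs'" using zQ split_list by metis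
        define C where "C = x # ps @ z # rev qs"
        have sP: "successively E (x # ps @ [z])"
          using less.prems(1) P sp unfolding walk_iff
          by (metis append.assoc append_Cons append_Nil successively_append_iff)
        have sQ: "successively E (x # qs @ [z])"
          using less.prems(2) Q sq xy unfolding walk_iff
          by (metis append.assoc append_Cons append_Nil successively_append_iff)
        then have sQ': "successively E (z # rev qs @ [x])"
          using Esym[OF sg] by (metis rev.simps(2) rev_append rev_rev_ident append_Cons append_Nil successively_rev)
        have sP2: "successively E (x # ps)" "E (last (x # ps)) z"
          using sP successively_append_iff[of E "x # ps" "[z]"] by auto
        have "C @ [hd C] = (x # ps) @ (z # rev qs @ [x])" unfolding C_def by simp
        then have "successively E (C @ [hd C])"
          using sP2 sQ' successively_append_iff[of E "x # ps" "z # rev qs @ [x]"] by simp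
        moreover have "distinct C"
          using less.prems(3,4) P Q sp sq xy nps unfolding C_def by auto
        moreover have "set C \<subseteq> V"
          using less.prems(1,2) P Q sp sq xy unfolding C_def walk_iff by auto
        moreover have "3 \<le> length C"
        proof -
          have "ps \<noteq> [] \<or> qs \<noteq> []" using pq P1 Q1 sp sq by (cases ps; cases qs) auto
          then have "length ps + length qs \<ge> 1" by (cases ps; cases qs) auto
          then show ?thesis unfolding C_def by simp
        qed
        ultimately have "is_cycle V E C" by (simp add: cycle_iff)
        then have "g \<le> length C" by (rule cmin)
        moreover have "length C + 2 \<le> length P + length Q"
          using P Q sp sq unfolding C_def by simp
        ultimately show ?thesis using less.prems(7) by simp
      qed
    qed
  qed
qed

lemma distinct_walk:
  "is_walk V E p \<Longrightarrow> \<exists>q. is_walk V E q \<and> distinct q \<and> hd q = hd p \<and> last q = last p \<and> length q \<le> length p"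
proof (induction "length p" arbitrary: p rule: less_induct)
  case less
  show ?case
  proof (cases "distinct p")
    case True then show ?thesis using less.prems by blast
  next
    case False
    then obtain xs ys zs y where p: "p = xs @ [y] @ ys @ [y] @ zs" using not_distinct_decomp by blast
    define p' where "p' = xs @ [y] @ zs"
    have s: "successively E p" "set p \<subseteq> V" using less.prems by (auto simp: walk_iff)
    have "successively E (xs @ [y])" "successively E ([y] @ zs)"
      using s(1) unfolding p
      by (metis append_assoc successively_append_iff)+
    then have "successively E p'" unfolding p'_def
      using successively_append_iff[of E "xs @ [y]" zs]
      by (auto simp: successively_append_iff successively_Cons)
    moreover have "set p' \<subseteq> V" using s(2) p unfolding p'_def by auto
    ultimately have w: "is_walk V E p'" by (simp add: walk_iff p'_def)
    have l: "length p' < length p" using p unfolding p'_def by simp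
    have "hd p' = hd p" "last p' = last p" unfolding p p'_def by (cases xs; simp)+
    then show ?thesis using less.hyps[OF l w] l by force
  qed
qed

lemma pd_le: "is_walk V E p \<Longrightarrow> path_dist V E (hd p) (last p) \<le> length p - 1"
  unfolding path_dist_def
  by (rule Least_le) (rule exI[of _ p], auto simp: is_walk_def)

lemma pd_ex: "is_walk V E p \<Longrightarrow> hd p = x \<Longrightarrow> last p = y \<Longrightarrow>
   \<exists>q. is_walk V E q \<and> hd q = x \<and> last q = y \<and> length q = Suc (path_dist V E x y)"
  unfolding path_dist_def
  by (rule LeastI_ex) (rule exI[of _ "length p - 1"], rule exI[of _ p], auto simp: is_walk_def)

lemma pd_sym: assumes "simple_graph V E" shows "path_dist V E x y = path_dist V E y x"
proof -
  have "\<And>x y n p. is_walk V E p \<Longrightarrow> hd p = x \<Longrightarrow> last p = y \<Longrightarrow> length p = Suc n \<Longrightarrow>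
     is_walk V E (rev p) \<and> hd (rev p) = y \<and> last (rev p) = x \<and> length (rev p) = Suc n"
    using succ_rev[OF assms] by (auto simp: walk_iff hd_rev last_rev)
  then have "\<And>n. (\<exists>p. is_walk V E p \<and> hd p = x \<and> last p = y \<and> length p = Suc n) \<longleftrightarrow>
     (\<exists>p. is_walk V E p \<and> hd p = y \<and> last p = x \<and> length p = Suc n)" by metis
  then show ?thesis unfolding path_dist_def by simp
qed

lemma pd_self: "x \<in> V \<Longrightarrow> path_dist V E x x = 0"
  using pd_le[of V E "[x]"] by (simp add: walk_iff)

lemma pd_seg:
  assumes "successively E xs" "set xs \<subseteq> V" "i \<le> j" "j < length xs"
  shows "path_dist V E (xs ! i) (xs ! j) \<le> j - i"
proof -
  define p where "p = take (Suc (j - i)) (drop i xs)"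
  have "successively E (drop i xs)"
    using assms(1) successively_append_iff[of E "take i xs" "drop i xs"] by simp
  then have "successively E p" unfolding p_def by (rule succ_take)
  moreover have "set p \<subseteq> V" using assms(2) unfolding p_def
    by (meson order_trans set_drop_subset set_take_subset)
  moreover have "p \<noteq> []" using assms unfolding p_def by simp
  ultimately have w: "is_walk V E p" by (simp add: walk_iff)
  have lp: "length p = Suc (j - i)" using assms unfolding p_def by simp
  have "hd p = xs ! i" using assms unfolding p_def by (simp add: hd_conv_nth)
  moreover have "last p = xs ! j" using assms lp unfolding p_def by (simp add: last_conv_nth)
  ultimately show ?thesis using pd_le[OF w] lp by simp
qed

lemma cyc_far:
  assumes sg: "simple_graph V E" and cmin: "\<And>c. is_cycle V E c \<Longrightarrow> g \<le> length c"
    and c: "is_cycle V E c" and lc: "length c = 2 * n" and g: "g = 2 * n"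
  shows "n \<le> path_dist V E (c ! 0) (c ! n)"
proof (rule ccontr)
  assume H: "\<not> n \<le> path_dist V E (c ! 0) (c ! n)"
  have c3: "3 \<le> length c" "distinct c" "set c \<subseteq> V" "successively E (c @ [hd c])"
    using c by (auto simp: cycle_iff)
  have nl: "n < length c" "c \<noteq> []" using lc c3 by auto
  define A where "A = take (Suc n) c"
  have "successively E c" using c3(4) successively_append_iff[of E c "[hd c]"] by simp
  then have "successively E A"
    using successively_append_iff[of E A "drop (Suc n) c"] unfolding A_def by simp
  moreover have "set A \<subseteq> V" using c3(3) unfolding A_def by (meson order_trans set_take_subset)
  moreover have "A \<noteq> []" using nl unfolding A_def by simp
  ultimately have wA: "is_walk V E A" by (simp add: walk_iff)
  have lA: "length A = Suc n" using nl unfolding A_def by simp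
  have hA: "hd A = c ! 0" using nl unfolding A_def by (simp add: hd_conv_nth)
  have tA: "last A = c ! n" using nl lA unfolding A_def by (simp add: last_conv_nth)
  have dA: "distinct A" using c3(2) unfolding A_def by simp
  obtain q where q: "is_walk V E q" "hd q = c ! 0" "last q = c ! n"
      "length q = Suc (path_dist V E (c ! 0) (c ! n))"
    using pd_ex[OF wA hA tA] by blast
  obtain r where r: "is_walk V E r" "distinct r" "hd r = c ! 0" "last r = c ! n" "length r \<le> length q"
    using distinct_walk[OF q(1)] q by auto
  have "r = A"
    by (rule short_paths_eq[OF sg cmin r(1) wA r(2) dA]) (use r q hA tA lA H g in auto)
  then show False using r q lA H by simp
qed

lemma rot_cycle: assumes "is_cycle V E c" shows "is_cycle V E (rotate1 c)"
proof -
  have H: "length c \<ge> 3" "distinct c" "set c \<subseteq> V" "\<forall>i < length c. E (c ! i) (c ! ((Suc i) mod length c))"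
    using assms by (auto simp: is_cycle_def)
  have "\<forall>i < length c. E (rotate1 c ! i) (rotate1 c ! ((Suc i) mod length c))"
  proof (intro allI impI)
    fix i assume i: "i < length c"
    have m: "Suc i mod length c < length c" using i by (metis less_nat_zero_code mod_less_divisor not_gr_zero)
    then have "rotate1 c ! ((Suc i) mod length c) = c ! (Suc (Suc i mod length c) mod length c)"
      by (simp add: nth_rotate1)
    also have "\<dots> = c ! (Suc (Suc i mod length c mod length c) mod length c)" by simp
    finally show "E (rotate1 c ! i) (rotate1 c ! ((Suc i) mod length c))"
      using H(4)[rule_format, of "Suc i mod length c"] i m by (simp add: nth_rotate1)
  qed
  then show ?thesis using H by (simp add: is_cycle_def)
qed

theorem mainTheorem7:
  fixes V :: "'a set" and E :: "'a \<Rightarrow> 'a \<Rightarrow> bool"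
  assumes "simple_graph V E"
    and "connected_graph V E"
    and "has_cycle V E"
    and "even (girth V E)"
  shows "\<not> cond_strict_neg_def V (\<lambda>x y. real (path_dist V E x y))"
proof
  assume csnd: "cond_strict_neg_def V (\<lambda>x y. real (path_dist V E x y))"
  note sg = assms(1)
  define g where "g = girth V E"
  have cmin: "\<And>c. is_cycle V E c \<Longrightarrow> g \<le> length c"
    unfolding g_def girth_def by (rule Least_le) blast
  have "\<exists>c. is_cycle V E c \<and> length c = g"
    unfolding g_def girth_def
  proof (rule LeastI_ex)
    obtain c0 where "is_cycle V E c0" using assms(3) unfolding has_cycle_def by blast
    then show "\<exists>m c. is_cycle V E c \<and> length c = m" by blast
  qed
  then obtain c where c: "is_cycle V E c" "length c = g" by blast
  obtain n where gn: "g = 2 * n" using assms(4) unfolding g_def by blast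
  have c3: "3 \<le> length c" "distinct c" "set c \<subseteq> V" "successively E (c @ [hd c])"
    using c by (auto simp: cycle_iff)
  have n2: "2 \<le> n" using c3(1) c(2) gn by simp
  have lc: "length c = 2 * n" using c gn by simp
  define d where "d = path_dist V E"
  define a where "a = c ! 0"
  define b where "b = c ! 1"
  define u where "u = c ! n"
  define w where "w = c ! Suc n"
  have far1: "n \<le> d a u" unfolding d_def a_def u_def by (rule cyc_far[OF sg cmin c(1) lc gn])
  have rc: "is_cycle V E (rotate1 c)" by (rule rot_cycle[OF c(1)])
  have lrc: "length (rotate1 c) = 2 * n" using lc by simp
  have far2: "n \<le> d (rotate1 c ! 0) (rotate1 c ! n)" unfolding d_def
    by (rule cyc_far[OF sg cmin rc lrc gn])
  have "rotate1 c ! 0 = b" "rotate1 c ! n = w"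
    using n2 lc by (simp_all add: nth_rotate1 b_def w_def)
  with far2 have far2': "n \<le> d b w" by simp
  define cc where "cc = c @ [hd c]"
  have scc: "successively E cc" "set cc \<subseteq> V" "length cc = Suc (2 * n)"
  proof -
    have "c \<noteq> []" using lc n2 by auto
    then have "hd c \<in> V" using c3(3) hd_in_set[of c] by blast
    then show "successively E cc" "set cc \<subseteq> V" "length cc = Suc (2 * n)"
      using c3 lc unfolding cc_def by auto
  qed
  have ccn: "\<And>k. k < 2 * n \<Longrightarrow> cc ! k = c ! k" using lc unfolding cc_def by (simp add: nth_append)
  have cne: "c \<noteq> []" using lc n2 by auto
  have cce: "cc ! (2 * n) = a" using lc n2 hd_conv_nth[OF cne] unfolding cc_def a_def by (simp add: nth_append)
  have ab: "d a b \<le> 1" using pd_seg[OF scc(1,2), of 0 1] scc(3) n2 ccn[of 0] ccn[of 1]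
    unfolding d_def a_def b_def by simp
  have uw: "d u w \<le> 1" using pd_seg[OF scc(1,2), of n "Suc n"] scc(3) n2 ccn[of n] ccn[of "Suc n"]
    unfolding d_def u_def w_def by simp
  have bu: "d b u \<le> n - 1" using pd_seg[OF scc(1,2), of 1 n] scc(3) n2 ccn[of n] ccn[of 1]
    unfolding d_def u_def b_def by simp
  have wa: "d w a \<le> n - 1" using pd_seg[OF scc(1,2), of "Suc n" "2 * n"] scc(3) n2 ccn[of "Suc n"] cce
    unfolding d_def w_def by simp
  have sym: "\<And>x y. d x y = d y x" unfolding d_def by (rule pd_sym[OF sg])
  have inV: "a \<in> V" "b \<in> V" "u \<in> V" "w \<in> V"
    using c3(3) lc n2 unfolding a_def b_def u_def w_def by (auto intro!: nth_mem)
  have self: "\<And>x. x \<in> V \<Longrightarrow> d x x = 0" unfolding d_def by (rule pd_self)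
  have dist: "a \<noteq> b" "a \<noteq> u" "a \<noteq> w" "b \<noteq> u" "b \<noteq> w" "u \<noteq> w"
    using c3(2) lc n2 unfolding a_def b_def u_def w_def by (auto simp: nth_eq_iff_index_eq)
  define l :: "'a \<Rightarrow> complex" where
    "l = (\<lambda>v. if v = a \<or> v = u then 1 else if v = b \<or> v = w then -1 else 0)"
  have S: "{v. l v \<noteq> 0} = {a, b, u, w}" unfolding l_def by auto
  have "Re (\<Sum>x\<in>{v. l v \<noteq> 0}. \<Sum>y\<in>{v. l v \<noteq> 0}. l x * cnj (l y) * complex_of_real (real (path_dist V E x y))) < 0"
    using csnd unfolding cond_strict_neg_def_def
    apply (elim allE[of _ l])
    using S dist inV by (auto simp: l_def)
  moreover have "Re (\<Sum>x\<in>{v. l v \<noteq> 0}. \<Sum>y\<in>{v. l v \<noteq> 0}. l x * cnj (l y) * complex_of_real (real (path_dist V E x y)))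
     = 2 * (real (d a u) + real (d b w)) - 2 * (real (d a b) + real (d u w) + real (d b u) + real (d w a))"
    unfolding S d_def[symmetric] using dist inV self sym[of a b] sym[of u a] sym[of w b] sym[of u w] sym[of b u] sym[of a w]
    by (simp add: l_def)
  moreover have "real (d a b) + real (d u w) + real (d b u) + real (d w a) \<le> real (d a u) + real (d b w)"
  proof -
    have "d a b + d u w + d b u + d w a \<le> d a u + d b w" using ab uw bu wa far1 far2' n2 by linarith
    then show ?thesis by linarith
  qed
  ultimately show False by (smt (verit))
qed

end
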